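(* Let $\lambda_{\max}>1$, $\tau\in\mathbb{Z}_+$, $k_1\in(0,\lambda_{\max}-1]$ and $k_2\in(0,1]$, and consider the two-arrival policy $\lambda(q)=1+k_1$ for $0\le q<\tau$ and $\lambda(q)=1-k_2$ for $q\ge\tau$. Let $\pi$ be the stationary distribution of the associated queue-length chain and $\bar q\sim\pi$. Then $$\mathbb{E}[\bar q]\ge\frac{1}{\tau+\frac1{k_2}}\left(\frac{\tau(\tau-1)}{2}+\frac{\tau}{k_2}+\frac{1-k_2}{k_2^2}\right).$$
   Context: For a policy $\lambda:\mathbb{Z}_+\to[0,\lambda_{\max}]$, the queue-length chain is the continuous-time birth–death chain on $\mathbb{Z}_+$ with rate $\lambda(q)$ from $q$ to $q+1$ and rate $1$ from $q$ to $q-1$ ($q\ge1$), restricted to the states reachable from $0$. *)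

theory Defs
  imports Complex_Main
begin

text \<open>Queue-length chain of a policy lam: continuous-time birth-death chain on nat,
  rate lam q from q to q+1, rate 1 from q to q-1 (q >= 1).\<close>

definition qrate :: "(nat \<Rightarrow> real) \<Rightarrow> nat \<Rightarrow> nat \<Rightarrow> real" where
  "qrate lam i j = (if j = Suc i then lam i else if Suc j = i then 1 else 0)"

definition reachable_states :: "(nat \<Rightarrow> real) \<Rightarrow> nat set" where
  "reachable_states lam = {q. \<forall>i<q. lam i > 0}"

text \<open>Stationary distribution of the chain restricted to the reachable states:
  a probability distribution on the reachable states satisfying global balance
  (total inflow rate = total outflow rate) at every reachable state.\<close>
definition is_stationary_dist :: "(nat \<Rightarrow> real) \<Rightarrow> (nat \<Rightarrow> real) \<Rightarrow> bool" where
  "is_stationary_dist lam \<pi> \<longleftrightarrow>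
     (\<forall>q. 0 \<le> \<pi> q) \<and>
     (\<forall>q. q \<notin> reachable_states lam \<longrightarrow> \<pi> q = 0) \<and>
     \<pi> sums 1 \<and>
     (\<forall>j \<in> reachable_states lam.
        (\<Sum>i\<in>{j - 1, Suc j}. \<pi> i * qrate lam i j) =
        \<pi> j * (\<Sum>k\<in>{j - 1, Suc j} - {j}. qrate lam j k))"

definition two_arrival_policy :: "real \<Rightarrow> real \<Rightarrow> nat \<Rightarrow> nat \<Rightarrow> real" where
  "two_arrival_policy k1 k2 \<tau> q = (if q < \<tau> then 1 + k1 else 1 - k2)"

end

theory Submission
  imports Defs
begin

lemma w_rec: "(a::real)^min (Suc q) t * b^(Suc q - t) = (if q < t then a else b) * (a^min q t * b^(q-t))"
proof (cases "q < t")
  case True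
  then have "min (Suc q) t = Suc (min q t)" "Suc q - t = 0" "q - t = 0" by auto
  then show ?thesis using True by simp
next
  case False
  then have "min (Suc q) t = min q t" "Suc q - t = Suc (q - t)" by auto
  then show ?thesis using False by simp
qed

lemma sum_lt_real: "(\<Sum>i<n. real i) = real n * (real n - 1) / 2"
  by (induction n) (auto simp: algebra_simps)

lemma detailed_balance:
  assumes st: "is_stationary_dist L \<pi>"
  shows "\<pi> (Suc n) = L n * \<pi> n"
proof (induction n)
  case 0
  have r0: "0 \<in> reachable_states L" by (simp add: reachable_states_def)
  have "(\<Sum>i\<in>{0 - 1, Suc 0}. \<pi> i * qrate L i 0) = \<pi> 0 * (\<Sum>k\<in>{0 - 1, Suc 0} - {0}. qrate L 0 k)"
    using st r0 unfolding is_stationary_dist_def by blast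
  then show ?case by (simp add: qrate_def)
next
  case (Suc n)
  show ?case
  proof (cases "Suc n \<in> reachable_states L")
    case True
    have "(\<Sum>i\<in>{Suc n - 1, Suc (Suc n)}. \<pi> i * qrate L i (Suc n)) = \<pi> (Suc n) * (\<Sum>k\<in>{Suc n - 1, Suc (Suc n)} - {Suc n}. qrate L (Suc n) k)"
      using st True unfolding is_stationary_dist_def by blast
    then have "\<pi> n * L n + \<pi> (Suc (Suc n)) = \<pi> (Suc n) * (1 + L (Suc n))"
      by (simp add: qrate_def)
    then show ?thesis using Suc by (simp add: algebra_simps)
  next
    case False
    then have "Suc (Suc n) \<notin> reachable_states L" unfolding reachable_states_def using less_SucI by blast
    then have "\<pi> (Suc (Suc n)) = 0" "\<pi> (Suc n) = 0"
      using st False unfolding is_stationary_dist_def by auto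
    then show ?thesis by simp
  qed
qed

theorem lemmaC4:
  fixes lmax k1 k2 :: real and \<tau> :: nat and \<pi> :: "nat \<Rightarrow> real"
  assumes "lmax > 1"
    and "0 < k1" "k1 \<le> lmax - 1"
    and "0 < k2" "k2 \<le> 1"
    and "is_stationary_dist (two_arrival_policy k1 k2 \<tau>) \<pi>"
  shows "summable (\<lambda>q. real q * \<pi> q) \<and>
         1 / (real \<tau> + 1 / k2) *
           (real \<tau> * (real \<tau> - 1) / 2 + real \<tau> / k2 + (1 - k2) / k2 ^ 2)
         \<le> (\<Sum>q. real q * \<pi> q)"
proof -
  define a where "a = 1 + k1"
  define b where "b = 1 - k2"
  define L where "L = two_arrival_policy k1 k2 \<tau>"
  define v where "v q = b ^ (q - \<tau>)" for q
  define f where "f q = a ^ min q \<tau>" for q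
  define w where "w q = f q * v q" for q
  define c where "c = 1 / (real \<tau> + 1 / k2) *
           (real \<tau> * (real \<tau> - 1) / 2 + real \<tau> / k2 + (1 - k2) / k2 ^ 2)"
  have st: "is_stationary_dist L \<pi>" using assms L_def by simp
  have b0: "0 \<le> b" "b < 1" using assms b_def by auto
  have a1: "1 \<le> a" using assms a_def by auto
  have pi_w: "\<pi> q = \<pi> 0 * w q" for q
  proof (induction q)
    case 0 then show ?case by (simp add: w_def f_def v_def)
  next
    case (Suc q)
    have "\<pi> (Suc q) = L q * \<pi> q" by (rule detailed_balance[OF st])
    also have "L q = (if q < \<tau> then a else b)" by (simp add: L_def two_arrival_policy_def a_def b_def)
    finally show ?case using Suc unfolding w_def f_def v_def
      by (simp only: w_rec) (simp add: algebra_simps)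
  qed
  have pi0: "0 \<le> \<pi> 0" and pis: "\<pi> sums 1" using st unfolding is_stationary_dist_def by auto
  have nb: "norm b < 1" using b0 by simp
  have k2b: "1 - b = k2" by (simp add: b_def)
  have g1: "(\<lambda>i. b ^ i) sums (1 / k2)" using geometric_sums[OF nb] k2b by simp
  have g2: "(\<lambda>i. real (Suc i) * b ^ i) sums (1 / k2 ^ 2)" using geometric_deriv_sums[OF nb] k2b by simp
  have "(\<lambda>i. v (i + \<tau>)) sums (1 / k2)" using g1 by (simp add: v_def)
  moreover have "(\<Sum>i<\<tau>. v i) = real \<tau>" by (simp add: v_def)
  ultimately have vS: "v sums (1 / k2 + real \<tau>)"
    using sums_iff_shift[of v \<tau>] by simp
  have "(\<lambda>i. real (Suc i) * b ^ i + (real \<tau> - 1) * b ^ i) sums (1 / k2 ^ 2 + (real \<tau> - 1) * (1 / k2))"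
    by (intro sums_add sums_mult g1 g2)
  then have "(\<lambda>i. real (i + \<tau>) * v (i + \<tau>)) sums (1 / k2 ^ 2 + (real \<tau> - 1) * (1 / k2))"
    by (simp add: v_def algebra_simps)
  then have vM: "(\<lambda>q. real q * v q) sums (1 / k2 ^ 2 + (real \<tau> - 1) * (1 / k2) + real \<tau> * (real \<tau> - 1) / 2)"
  proof -
    assume h: "(\<lambda>i. real (i + \<tau>) * v (i + \<tau>)) sums (1 / k2 ^ 2 + (real \<tau> - 1) * (1 / k2))"
    have "(\<Sum>i<\<tau>. real i * v i) = (\<Sum>i<\<tau>. real i)" by (intro sum.cong) (auto simp: v_def)
    then have e: "(\<Sum>i<\<tau>. real i * v i) = real \<tau> * (real \<tau> - 1) / 2" using sum_lt_real by simp
    have "(\<lambda>q. real q * v q) sums (1 / k2 ^ 2 + (real \<tau> - 1) * (1 / k2) + (\<Sum>i<\<tau>. real i * v i))"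
      using h sums_iff_shift[of "\<lambda>q. real q * v q" \<tau>] by simp
    then show ?thesis unfolding e .
  qed
  have True proof -
    have "(\<Sum>i<\<tau>. real i * v i) = (\<Sum>i<\<tau>. real i)" by (intro sum.cong) (auto simp: v_def)
    then show True by simp
  qed
  have Sne: "real \<tau> + 1 / k2 > 0" using assms(4) by (intro add_nonneg_pos) auto
  have cS: "c * (1 / k2 + real \<tau>) = 1 / k2 ^ 2 + (real \<tau> - 1) * (1 / k2) + real \<tau> * (real \<tau> - 1) / 2"
  proof -
    have "c * (1 / k2 + real \<tau>) = real \<tau> * (real \<tau> - 1) / 2 + real \<tau> / k2 + (1 - k2) / k2 ^ 2"
      unfolding c_def using Sne by (simp add: add.commute)
    also have "real \<tau> / k2 + (1 - k2) / k2 ^ 2 = 1 / k2 ^ 2 + (real \<tau> - 1) * (1 / k2)"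
      using assms(4) by (simp add: field_simps power2_eq_square)
    ultimately show ?thesis by simp
  qed
  have vzero: "(\<lambda>q. (real q - c) * v q) sums 0"
  proof -
    have "(\<lambda>q. real q * v q - c * v q) sums (1 / k2 ^ 2 + (real \<tau> - 1) * (1 / k2) + real \<tau> * (real \<tau> - 1) / 2 - c * (1 / k2 + real \<tau>))"
      by (intro sums_diff sums_mult vM vS)
    then show ?thesis using cS by (simp add: algebra_simps)
  qed
  have "summable (\<lambda>i. a ^ \<tau> * b ^ i)" using g1 by (intro summable_mult) (auto simp: sums_iff)
  then have "summable (\<lambda>i. w (i + \<tau>))" by (simp add: w_def f_def v_def)
  then have ws: "summable w" by simp
  have "summable (\<lambda>i. a ^ \<tau> * (real (Suc i) * b ^ i + (real \<tau> - 1) * b ^ i))"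
    using g1 g2 by (intro summable_mult summable_add) (auto simp: sums_iff)
  then have "summable (\<lambda>i. real (i + \<tau>) * w (i + \<tau>))" by (simp add: w_def f_def v_def algebra_simps)
  then have qws: "summable (\<lambda>q. real q * w q)" using summable_iff_shift[of "\<lambda>q. real q * w q" \<tau>] by simp
  define F where "F = a ^ min (nat \<lceil>c\<rceil>) \<tau>"
  have key: "F * ((real q - c) * v q) \<le> (real q - c) * w q" for q
  proof -
    have v0: "0 \<le> v q" using b0 by (simp add: v_def)
    have "(real q - c) * (f q - F) \<ge> 0"
    proof (cases "real q \<ge> c")
      case True
      then have h: "nat \<lceil>c\<rceil> \<le> q" by linarith
      have m: "min (nat \<lceil>c\<rceil>) \<tau> \<le> min q \<tau>" by (rule min.mono[OF h order.refl])
      have "F \<le> f q" unfolding F_def f_def by (rule power_increasing[OF m a1])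
      then show ?thesis using True by simp
    next
      case False
      then have h: "q \<le> nat \<lceil>c\<rceil>" by linarith
      have m: "min q \<tau> \<le> min (nat \<lceil>c\<rceil>) \<tau>" by (rule min.mono[OF h order.refl])
      have "f q \<le> F" unfolding F_def f_def by (rule power_increasing[OF m a1])
      then show ?thesis using False by (simp add: mult_nonpos_nonpos)
    qed
    then have "0 \<le> (real q - c) * (f q - F) * v q" using v0 by simp
    then show ?thesis by (simp add: w_def algebra_simps)
  qed
  have h1: "(\<lambda>q. F * ((real q - c) * v q)) sums (F * 0)" by (intro sums_mult vzero)
  have sm: "summable (\<lambda>q. real q * w q - c * w q)" by (intro summable_diff qws summable_mult ws)
  have "(\<lambda>q. real q * w q - c * w q) = (\<lambda>q. (real q - c) * w q)" by (simp add: left_diff_distrib)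
  then have h2: "(\<lambda>q. (real q - c) * w q) sums (\<Sum>q. (real q - c) * w q)" using sm by (metis summable_sums)
  have "F * 0 \<le> (\<Sum>q. (real q - c) * w q)" by (rule sums_le[OF key h1 h2])
  then have "0 \<le> (\<Sum>q. (real q - c) * w q)" by simp
  also have "(\<Sum>q. (real q - c) * w q) = (\<Sum>q. real q * w q) - c * (\<Sum>q. w q)"
  proof -
    have "(\<Sum>q. (real q - c) * w q) = (\<Sum>q. real q * w q - c * w q)" by (simp add: left_diff_distrib)
    also have "\<dots> = (\<Sum>q. real q * w q) - (\<Sum>q. c * w q)"
      by (rule suminf_diff[OF qws summable_mult[OF ws], symmetric])
    also have "(\<Sum>q. c * w q) = c * (\<Sum>q. w q)" by (rule suminf_mult[OF ws])
    finally show ?thesis .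
  qed
  finally have ineq: "c * (\<Sum>q. w q) \<le> (\<Sum>q. real q * w q)" by simp
  have "(\<lambda>q. \<pi> 0 * w q) sums (\<pi> 0 * (\<Sum>q. w q))" using ws by (intro sums_mult summable_sums)
  moreover have "(\<lambda>q. \<pi> 0 * w q) = \<pi>" by (intro ext) (rule pi_w[symmetric])
  ultimately have one: "\<pi> 0 * (\<Sum>q. w q) = 1" using pis sums_unique2 by metis
  have qpi: "(\<lambda>q. real q * \<pi> q) sums (\<pi> 0 * (\<Sum>q. real q * w q))"
  proof -
    have e: "\<pi> 0 * (real q * w q) = real q * \<pi> q" for q
    proof -
      have "\<pi> q = \<pi> 0 * w q" by (rule pi_w)
      then show ?thesis by (simp only:) (simp add: algebra_simps)
    qed
    show ?thesis using sums_mult[OF summable_sums[OF qws], of "\<pi> 0"] unfolding e .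
  qed
  have "c = c * (\<pi> 0 * (\<Sum>q. w q))" using one by simp
  also have "\<dots> = \<pi> 0 * (c * (\<Sum>q. w q))" by simp
  also have "\<dots> \<le> \<pi> 0 * (\<Sum>q. real q * w q)" using ineq pi0 by (rule mult_left_mono)
  finally show ?thesis using qpi unfolding c_def by (auto simp: sums_iff)
qed

end
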